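(* Let $S$ be a monoid, $A_S$ a Rees artinian (in particular, an artinian) right $S$-act, and $f\in\mathrm{End}(A_S)$. Then there is $n\in\mathbb N$ with $\ker f^n\vee\mathcal K_{\mathrm{Im} f^n}=\nabla_A$. Moreover, $f$ is an automorphism if and only if $f$ is injective.
   Context: $\ker h=\{(a,a'):h(a)=h(a')\}$; for a subact $B\subseteq A$, $\mathcal K_B=(B\times B)\cup\Delta_A$ where $\Delta_A=\{(a,a):a\in A\}$; $\nabla_A=A\times A$; $\vee$ is the join in the lattice of congruences on $A_S$. Rees artinian means the descending chain condition on subacts; artinian means the descending chain condition on congruences. *)

theory Defs
  imports Main
begin

definition right_act :: "'b set \<Rightarrow> ('b \<Rightarrow> 'a::monoid_mult \<Rightarrow> 'b) \<Rightarrow> bool" where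
  "right_act A act \<longleftrightarrow>
     (\<forall>a\<in>A. \<forall>s. act a s \<in> A) \<and> (\<forall>a\<in>A. act a 1 = a) \<and>
     (\<forall>a\<in>A. \<forall>s t. act (act a s) t = act a (s * t))"

definition subact :: "'b set \<Rightarrow> ('b \<Rightarrow> 'a::monoid_mult \<Rightarrow> 'b) \<Rightarrow> 'b set \<Rightarrow> bool" where
  "subact A act B \<longleftrightarrow> B \<subseteq> A \<and> (\<forall>b\<in>B. \<forall>s. act b s \<in> B)"

definition rees_artinian :: "'b set \<Rightarrow> ('b \<Rightarrow> 'a::monoid_mult \<Rightarrow> 'b) \<Rightarrow> bool" where
  "rees_artinian A act \<longleftrightarrow>
     (\<forall>C :: nat \<Rightarrow> 'b set. (\<forall>n. subact A act (C n)) \<and> (\<forall>n. C (Suc n) \<subseteq> C n)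
        \<longrightarrow> (\<exists>m. \<forall>n\<ge>m. C n = C m))"

definition act_endo :: "'b set \<Rightarrow> ('b \<Rightarrow> 'a::monoid_mult \<Rightarrow> 'b) \<Rightarrow> ('b \<Rightarrow> 'b) \<Rightarrow> bool" where
  "act_endo A act f \<longleftrightarrow> (\<forall>a\<in>A. f a \<in> A) \<and> (\<forall>a\<in>A. \<forall>s. f (act a s) = act (f a) s)"

definition act_auto :: "'b set \<Rightarrow> ('b \<Rightarrow> 'a::monoid_mult \<Rightarrow> 'b) \<Rightarrow> ('b \<Rightarrow> 'b) \<Rightarrow> bool" where
  "act_auto A act f \<longleftrightarrow> act_endo A act f \<and> bij_betw f A A"

definition act_congruence :: "'b set \<Rightarrow> ('b \<Rightarrow> 'a::monoid_mult \<Rightarrow> 'b) \<Rightarrow> 'b rel \<Rightarrow> bool" where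
  "act_congruence A act \<rho> \<longleftrightarrow> equiv A \<rho> \<and> (\<forall>(a,b)\<in>\<rho>. \<forall>s. (act a s, act b s) \<in> \<rho>)"

definition cong_join :: "'b set \<Rightarrow> ('b \<Rightarrow> 'a::monoid_mult \<Rightarrow> 'b) \<Rightarrow> 'b rel \<Rightarrow> 'b rel \<Rightarrow> 'b rel" where
  "cong_join A act \<rho> \<sigma> = \<Inter>{\<theta>. act_congruence A act \<theta> \<and> \<rho> \<union> \<sigma> \<subseteq> \<theta>}"

definition ker_on :: "'b set \<Rightarrow> ('b \<Rightarrow> 'c) \<Rightarrow> 'b rel" where
  "ker_on A h = {(a, a'). a \<in> A \<and> a' \<in> A \<and> h a = h a'}"

definition rees_cong :: "'b set \<Rightarrow> 'b set \<Rightarrow> 'b rel" where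
  "rees_cong A B = (B \<times> B) \<union> Id_on A"

end

theory Submission
  imports Defs
begin

lemma fp_in: "act_endo A act f \<Longrightarrow> a \<in> A \<Longrightarrow> (f ^^ n) a \<in> A"
  by (induction n) (auto simp: act_endo_def)

lemma fp_act: "act_endo A act f \<Longrightarrow> a \<in> A \<Longrightarrow>
   (f ^^ n) (act a s) = act ((f ^^ n) a) s"
  by (induction n) (auto simp: act_endo_def fp_in)
lemma fp_inj: "act_endo A act f \<Longrightarrow> inj_on f A \<Longrightarrow> inj_on (f ^^ n) A"
proof (induction n)
  case (Suc n)
  show ?case unfolding funpow.simps
    by (rule comp_inj_on[OF Suc.IH[OF Suc.prems]]) (metis Suc.prems fp_in image_subsetI inj_on_subset)
qed simp

lemma stab:
  assumes r: "right_act A act" and ra: "rees_artinian A act" and e: "act_endo A act f"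
  shows "\<exists>n\<ge>1. (f ^^ n) ` A = (f ^^ (n + n)) ` A"
proof -
  let ?C = "\<lambda>n. (f ^^ n) ` A"
  have "\<forall>n. subact A act (?C n)"
  proof
    fix n
    have "?C n \<subseteq> A" using fp_in[OF e] by blast
    moreover have "\<forall>b\<in>?C n. \<forall>s. act b s \<in> ?C n"
    proof (intro ballI allI)
      fix b s assume "b \<in> ?C n"
      then obtain a where a: "a \<in> A" "b = (f ^^ n) a" by blast
      have "act a s \<in> A" using r a(1) unfolding right_act_def by blast
      moreover have "act b s = (f ^^ n) (act a s)" using fp_act[OF e a(1)] a(2) by simp
      ultimately show "act b s \<in> ?C n" by blast
    qed
    ultimately show "subact A act (?C n)" unfolding subact_def by blast
  qed
  moreover have "\<forall>n. ?C (Suc n) \<subseteq> ?C n"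
  proof
    fix n
    have "f ` A \<subseteq> A" using e unfolding act_endo_def by blast
    hence "(f ^^ n) ` (f ` A) \<subseteq> ?C n" by blast
    moreover have "f ^^ Suc n = (f ^^ n) \<circ> f" by (rule funpow_Suc_right)
    ultimately show "?C (Suc n) \<subseteq> ?C n"
    proof (intro subsetI)
      fix x assume h: "(f ^^ n) ` (f ` A) \<subseteq> ?C n" "f ^^ Suc n = (f ^^ n) \<circ> f"
        and "x \<in> ?C (Suc n)"
      then obtain a where a: "a \<in> A" "x = (f ^^ Suc n) a" by blast
      hence "x = (f ^^ n) (f a)" by (simp add: funpow_swap1)
      thus "x \<in> ?C n" using h(1) a(1) by blast
    qed
  qed
  ultimately have "\<exists>m. \<forall>n\<ge>m. ?C n = ?C m"
    using ra[unfolded rees_artinian_def, rule_format, of ?C] by blast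
  then obtain m where m: "\<forall>n\<ge>m. ?C n = ?C m" by blast
  define n where "n = max m 1"
  have "m \<le> n" "m \<le> n + n" "1 \<le> n" unfolding n_def by simp_all
  hence "?C n = ?C m" "?C (n+n) = ?C m" using m by blast+
  hence "?C n = ?C (n+n)" by simp
  thus ?thesis using \<open>1 \<le> n\<close> by blast
qed
theorem mainTheorem10:
  fixes A :: "'b set" and act :: "'b \<Rightarrow> 'a::monoid_mult \<Rightarrow> 'b" and f :: "'b \<Rightarrow> 'b"
  assumes "right_act A act"
    and "rees_artinian A act"
    and "act_endo A act f"
  shows "(\<exists>n::nat. n \<ge> 1 \<and>
            cong_join A act (ker_on A (f ^^ n)) (rees_cong A ((f ^^ n) ` A)) = A \<times> A)
         \<and> (act_auto A act f \<longleftrightarrow> inj_on f A)"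
proof -
  note r = assms(1) and e = assms(3)
  obtain n where n1: "n \<ge> 1" and st: "(f ^^ n) ` A = (f ^^ (n + n)) ` A"
    using stab[OF assms] by blast
  have key: "\<And>a. a \<in> A \<Longrightarrow> \<exists>b\<in>A. (f ^^ n) a = (f ^^ n) ((f ^^ n) b)"
  proof -
    fix a assume a: "a \<in> A"
    hence "(f ^^ n) a \<in> (f ^^ (n + n)) ` A" using st by auto
    thus "\<exists>b\<in>A. (f ^^ n) a = (f ^^ n) ((f ^^ n) b)" by (auto simp: funpow_add)
  qed
  let ?K = "ker_on A (f ^^ n)" and ?R = "rees_cong A ((f ^^ n) ` A)"
  have P1: "cong_join A act ?K ?R = A \<times> A"
  proof
    have "act_congruence A act (A \<times> A)"
      using r unfolding act_congruence_def right_act_def equiv_def refl_on_def sym_def trans_def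
      by auto
    moreover have "?K \<union> ?R \<subseteq> A \<times> A"
      using e by (auto simp: ker_on_def rees_cong_def fp_in)
    ultimately show "cong_join A act ?K ?R \<subseteq> A \<times> A"
      unfolding cong_join_def by blast
  next
    show "A \<times> A \<subseteq> cong_join A act ?K ?R"
      unfolding cong_join_def
    proof (intro subsetI InterI, clarify)
      fix a a' \<theta> assume a: "a \<in> A" "a' \<in> A" and c: "act_congruence A act \<theta>"
        and sub: "?K \<union> ?R \<subseteq> \<theta>"
      from c have eq: "equiv A \<theta>" by (simp add: act_congruence_def)
      obtain b where b: "b \<in> A" "(f ^^ n) a = (f ^^ n) ((f ^^ n) b)" using key a(1) by blast
      obtain b' where b': "b' \<in> A" "(f ^^ n) a' = (f ^^ n) ((f ^^ n) b')" using key a(2) by blast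
      have fb: "(f ^^ n) b \<in> A" "(f ^^ n) b' \<in> A" using e b b' fp_in by metis+
      have 1: "(a, (f ^^ n) b) \<in> \<theta>" using sub a b fb by (auto simp: ker_on_def)
      have 2: "((f ^^ n) b, (f ^^ n) b') \<in> \<theta>" using sub b b' by (auto simp: rees_cong_def)
      have 3: "((f ^^ n) b', a') \<in> \<theta>" using sub a b' fb by (auto simp: ker_on_def)
      from 1 2 3 eq show "(a, a') \<in> \<theta>" unfolding equiv_def trans_def by blast
    qed
  qed
  have P2: "act_auto A act f \<longleftrightarrow> inj_on f A"
  proof
    assume "act_auto A act f" thus "inj_on f A" by (simp add: act_auto_def bij_betw_def)
  next
    assume inj: "inj_on f A"
    have injn: "inj_on (f ^^ n) A"
      using fp_inj[OF e inj] .
    have "A \<subseteq> (f ^^ n) ` A"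
    proof
      fix a assume a: "a \<in> A"
      then obtain b where b: "b \<in> A" "(f ^^ n) a = (f ^^ n) ((f ^^ n) b)" using key by blast
      have "a = (f ^^ n) b" using injn a b fp_in[OF e b(1)] by (auto dest: inj_onD)
      thus "a \<in> (f ^^ n) ` A" using b by auto
    qed
    moreover obtain k where k: "n = Suc k" using n1 by (cases n) auto
    ultimately have "A \<subseteq> f ` ((f ^^ k) ` A)" by (simp add: image_comp)
    moreover have "(f ^^ k) ` A \<subseteq> A" using fp_in[OF e] by auto
    ultimately have "A \<subseteq> f ` A" by blast
    moreover have "f ` A \<subseteq> A" using e by (auto simp: act_endo_def)
    ultimately show "act_auto A act f" using e inj
      by (auto simp: act_auto_def bij_betw_def)
  qed
  show ?thesis using P1 P2 n1 by blast
qed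

end
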